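(* Let $n\ge 2$, let $\mathcal{S}\subseteq(\mathbb{C}^d)^{\otimes n}$ be the permutation-symmetric subspace, and let $B=P\,J\,P^{-1}$ be a $d\times d$ complex matrix with Jordan normal form $J$, whose distinct eigenvalues are $\lambda_1,\ldots,\lambda_p$. Let $\tilde\lambda_1,\ldots,\tilde\lambda_p$ be pairwise distinct complex numbers, and let $\tilde J$ be obtained from $J$ by replacing, in every Jordan block, the eigenvalue $\lambda_i$ by $\tilde\lambda_i$ (keeping the block sizes and the superdiagonal ones), and set $\tilde B=P\tilde J P^{-1}$. Then for every $|\psi\rangle\in\mathcal{S}$: $B_{(1)}|\psi\rangle\in\mathcal{S}$ if and only if $\tilde B_{(1)}|\psi\rangle\in\mathcal{S}$.
   Context: $\mathcal{S}$ is the set of vectors in $(\mathbb{C}^d)^{\otimes n}$ invariant under all permutations of the $n$ tensor factors. For a $d\times d$ matrix $Y$, $Y_{(1)}$ denotes $Y\otimes\mathbb{I}\otimes\cdots\otimes\mathbb{I}$ on $(\mathbb{C}^d)^{\otimes n}$. One says $B$ stabilizes $|\psi\rangle\in\mathcal{S}$ if $B_{(1)}|\psi\rangle\in\mathcal{S}$; the theorem says the set of states stabilized by $B$ depends only on the Jordan block structure (which blocks share an eigenvalue), not on the eigenvalue values. *)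

theory Defs
  imports "Jordan_Normal_Form.Jordan_Normal_Form" "HOL-Combinatorics.Permutations"
begin

text \<open>Vectors of (C^d)^{tensor n} are represented by their coordinates: functions
  from index tuples i (tensor factors 0..n-1, each index in 0..d-1) to complex numbers.
  Tensor factor 1 of the paper is factor 0 here.\<close>

definition tuples :: "nat \<Rightarrow> nat \<Rightarrow> (nat \<Rightarrow> nat) set" where
  "tuples n d = {i. (\<forall>k<n. i k < d) \<and> (\<forall>k\<ge>n. i k = 0)}"

definition symmetric_tensor :: "nat \<Rightarrow> nat \<Rightarrow> ((nat \<Rightarrow> nat) \<Rightarrow> complex) \<Rightarrow> bool" where
  "symmetric_tensor n d \<psi> \<longleftrightarrow>
     (\<forall>i\<in>tuples n d. \<forall>\<sigma>. \<sigma> permutes {..<n} \<longrightarrow> \<psi> (i \<circ> \<sigma>) = \<psi> i)"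

definition apply_first :: "nat \<Rightarrow> complex mat \<Rightarrow> ((nat \<Rightarrow> nat) \<Rightarrow> complex) \<Rightarrow> ((nat \<Rightarrow> nat) \<Rightarrow> complex)" where
  "apply_first d Y \<psi> = (\<lambda>i. \<Sum>j<d. Y $$ (i 0, j) * \<psi> (i(0 := j)))"

end

theory Submission
  imports Defs
begin


fun jev :: "(nat \<times> complex) list \<Rightarrow> nat \<Rightarrow> complex" where
  "jev [] i = 0"
| "jev ((k,a)#xs) i = (if i < k then a else jev xs (i - k))"

fun jsup :: "(nat \<times> complex) list \<Rightarrow> nat \<Rightarrow> bool" where
  "jsup [] i = False"
| "jsup ((k,a)#xs) i = (if i < k then Suc i < k else jsup xs (i - k))"

lemma jordan_matrix_index:
  "a < sum_list (map fst n_as) \<Longrightarrow> b < sum_list (map fst n_as) \<Longrightarrow>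
   jordan_matrix n_as $$ (a,b) = (if a = b then jev n_as a else if b = Suc a \<and> jsup n_as a then 1 else 0)"
proof (induction n_as arbitrary: a b)
  case Nil then show ?case by simp
next
  case (Cons x xs)
  obtain k c where x: "x = (k,c)" by force
  show ?case
  proof (cases "a < k")
    case True
    then show ?thesis
    proof (cases "b < k")
      case True with \<open>a < k\<close> show ?thesis unfolding x jordan_matrix_Cons
        by (subst index_mat_four_block) auto
    next
      case False with \<open>a < k\<close> Cons.prems show ?thesis unfolding x jordan_matrix_Cons
        by (subst index_mat_four_block) auto
    qed
  next
    case False
    have ab: "a - k < sum_list (map fst xs)" "b - k < sum_list (map fst xs)" if "\<not> b < k"
      using Cons.prems False that unfolding x by auto
    show ?thesis
    proof (cases "b < k")
      case True with False Cons.prems show ?thesis unfolding x jordan_matrix_Cons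
        by (subst index_mat_four_block) auto
    next
      case False2: False
      have e1: "(a = b) = (a - k = b - k)" "(b = Suc a) = (b - k = Suc (a - k))"
        using False False2 by auto
      show ?thesis using Cons.IH[OF ab[OF False2]] False False2 Cons.prems unfolding x jordan_matrix_Cons e1
        by (subst index_mat_four_block) auto
    qed
  qed
qed

lemma jev_map: "jev (map (\<lambda>(k, a). (k, f a)) n_as) i = (if i < sum_list (map fst n_as) then f (jev n_as i) else 0)"
  by (induction n_as arbitrary: i) auto

lemma jsup_map: "jsup (map (\<lambda>(k, a). (k, f a)) n_as) i = jsup n_as i"
  by (induction n_as arbitrary: i) auto

lemma jsup_prop: "jsup n_as i \<Longrightarrow> Suc i < sum_list (map fst n_as) \<and> jev n_as (Suc i) = jev n_as i"
proof (induction n_as arbitrary: i)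
  case Nil then show ?case by simp
next
  case (Cons x xs)
  obtain k c where x: "x = (k,c)" by force
  show ?case
  proof (cases "i < k")
    case True then show ?thesis using Cons.prems unfolding x by auto
  next
    case False
    then have "jsup xs (i - k)" using Cons.prems unfolding x by auto
    from Cons.IH[OF this] False show ?thesis unfolding x by (auto simp: Suc_diff_le)
  qed
qed

lemma jev_in: "i < sum_list (map fst n_as) \<Longrightarrow> jev n_as i \<in> snd ` set n_as"
  by (induction n_as arbitrary: i) (force split: if_splits)+



definition jcond :: "nat \<Rightarrow> (nat \<Rightarrow> complex) \<Rightarrow> (nat \<Rightarrow> bool) \<Rightarrow> complex mat \<Rightarrow> bool" where
 "jcond D \<mu> s X \<longleftrightarrow> (\<forall>a<D. \<forall>b<D. \<mu> a * X$$(a,b) + (if s a then X$$(Suc a,b) else 0)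
      = \<mu> b * X$$(a,b) + (if s b then X$$(a,Suc b) else 0))"

lemma jcond_zero:
  assumes c: "jcond D \<mu> s X" and sp: "\<forall>i. s i \<longrightarrow> Suc i < D \<and> \<mu> (Suc i) = \<mu> i"
  shows "a < D \<Longrightarrow> b < D \<Longrightarrow> \<mu> a \<noteq> \<mu> b \<Longrightarrow> X$$(a,b) = 0"
proof (induction "2*D - (a+b)" arbitrary: a b rule: less_induct)
  case less
  have h1: "(if s a then X$$(Suc a,b) else 0) = 0"
  proof (cases "s a")
    case True
    with sp have "Suc a < D" "\<mu> (Suc a) = \<mu> a" by auto
    with less.prems show ?thesis using less.hyps[of "Suc a" b] True by auto
  qed simp
  have h2: "(if s b then X$$(a,Suc b) else 0) = 0"
  proof (cases "s b")
    case True
    with sp have "Suc b < D" "\<mu> (Suc b) = \<mu> b" by auto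
    with less.prems show ?thesis using less.hyps[of a "Suc b"] True by auto
  qed simp
  from c less.prems have "\<mu> a * X$$(a,b) + (if s a then X$$(Suc a,b) else 0)
      = \<mu> b * X$$(a,b) + (if s b then X$$(a,Suc b) else 0)" unfolding jcond_def by blast
  then have "(\<mu> a - \<mu> b) * X$$(a,b) = 0" unfolding h1 h2 by (simp add: algebra_simps)
  with less.prems show ?case by simp
qed

lemma jcond_transfer:
  assumes c: "jcond D \<mu> s X" and sp: "\<forall>i. s i \<longrightarrow> Suc i < D \<and> \<mu> (Suc i) = \<mu> i"
    and eqv: "\<forall>a b. a < D \<longrightarrow> b < D \<longrightarrow> (\<mu> a = \<mu> b \<longleftrightarrow> \<nu> a = \<nu> b)"
  shows "jcond D \<nu> s X"
  unfolding jcond_def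
proof (intro allI impI)
  fix a b assume ab: "a < D" "b < D"
  show "\<nu> a * X$$(a,b) + (if s a then X$$(Suc a,b) else 0)
      = \<nu> b * X$$(a,b) + (if s b then X$$(a,Suc b) else 0)"
  proof (cases "\<mu> a = \<mu> b")
    case True
    with eqv ab have "\<nu> a = \<nu> b" by blast
    moreover from c ab have "\<mu> a * X$$(a,b) + (if s a then X$$(Suc a,b) else 0)
      = \<mu> b * X$$(a,b) + (if s b then X$$(a,Suc b) else 0)" unfolding jcond_def by blast
    ultimately show ?thesis using True by simp
  next
    case False
    have z0: "X$$(a,b) = 0" using jcond_zero[OF c sp ab False] .
    have z1: "(if s a then X$$(Suc a,b) else 0) = 0"
      using jcond_zero[OF c sp, of "Suc a" b] sp ab False by auto
    have z2: "(if s b then X$$(a,Suc b) else 0) = 0"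
      using jcond_zero[OF c sp, of a "Suc b"] sp ab False by auto
    show ?thesis unfolding z0 z1 z2 by simp
  qed
qed

lemma jmat_left:
  assumes J: "(J::complex mat) \<in> carrier_mat D D" and X: "X \<in> carrier_mat D D"
    and Jf: "\<And>a b. a < D \<Longrightarrow> b < D \<Longrightarrow> J $$ (a,b) = (if a = b then \<mu> a else if b = Suc a \<and> s a then 1 else 0)"
    and sp: "\<forall>i. s i \<longrightarrow> Suc i < D"
    and ab: "a < D" "b < D"
  shows "(J*X)$$(a,b) = \<mu> a * X$$(a,b) + (if s a then X$$(Suc a,b) else 0)"
proof -
  have "(J*X)$$(a,b) = (\<Sum>c\<in>{0..<D}. J$$(a,c) * X$$(c,b))"
    using J X ab by (auto simp: scalar_prod_def intro!: sum.cong)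
  also have "\<dots> = (\<Sum>c\<in>{0..<D}. (if c = a then \<mu> a * X$$(a,b) else 0) +
        (if s a then (if c = Suc a then X$$(Suc a,b) else 0) else 0))"
    by (rule sum.cong) (auto simp: Jf ab mult.commute)
  also have "\<dots> = \<mu> a * X$$(a,b) + (if s a then X$$(Suc a,b) else 0)"
    using ab sp by (cases "s a") (auto simp: sum.distrib)
  finally show ?thesis .
qed

lemma jmat_right:
  assumes J: "(J::complex mat) \<in> carrier_mat D D" and X: "X \<in> carrier_mat D D"
    and Jf: "\<And>a b. a < D \<Longrightarrow> b < D \<Longrightarrow> J $$ (a,b) = (if a = b then \<mu> a else if b = Suc a \<and> s a then 1 else 0)"
    and sp: "\<forall>i. s i \<longrightarrow> Suc i < D"
    and ab: "a < D" "b < D"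
  shows "(X*transpose_mat J)$$(a,b) = \<mu> b * X$$(a,b) + (if s b then X$$(a,Suc b) else 0)"
proof -
  have "(X*transpose_mat J)$$(a,b) = (\<Sum>c\<in>{0..<D}. X$$(a,c) * J$$(b,c))"
    using J X ab by (auto simp: scalar_prod_def intro!: sum.cong)
  also have "\<dots> = (\<Sum>c\<in>{0..<D}. (if c = b then \<mu> b * X$$(a,b) else 0) +
        (if s b then (if c = Suc b then X$$(a,Suc b) else 0) else 0))"
    by (rule sum.cong) (auto simp: Jf ab mult.commute)
  also have "\<dots> = \<mu> b * X$$(a,b) + (if s b then X$$(a,Suc b) else 0)"
    using ab sp by (cases "s b") (auto simp: sum.distrib)
  finally show ?thesis .
qed

lemma jmat_iff:
  assumes J: "(J::complex mat) \<in> carrier_mat D D" and X: "X \<in> carrier_mat D D"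
    and Jf: "\<And>a b. a < D \<Longrightarrow> b < D \<Longrightarrow> J $$ (a,b) = (if a = b then \<mu> a else if b = Suc a \<and> s a then 1 else 0)"
    and sp: "\<forall>i. s i \<longrightarrow> Suc i < D"
  shows "(J*X = X*transpose_mat J) \<longleftrightarrow> jcond D \<mu> s X"
proof
  assume e: "J*X = X*transpose_mat J"
  show "jcond D \<mu> s X" unfolding jcond_def
  proof (intro allI impI)
    fix a b assume ab: "a < D" "b < D"
    from e have "(J*X)$$(a,b) = (X*transpose_mat J)$$(a,b)" by simp
    then show "\<mu> a * X$$(a,b) + (if s a then X$$(Suc a,b) else 0)
      = \<mu> b * X$$(a,b) + (if s b then X$$(a,Suc b) else 0)"
      using jmat_left[OF J X Jf sp ab] jmat_right[OF J X Jf sp ab] by simp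
  qed
next
  assume c: "jcond D \<mu> s X"
  show "J*X = X*transpose_mat J"
  proof (rule eq_matI)
    fix a b assume "a < dim_row (X*transpose_mat J)" "b < dim_col (X*transpose_mat J)"
    then have ab: "a < D" "b < D" using J X by auto
    show "(J*X)$$(a,b) = (X*transpose_mat J)$$(a,b)"
      using jmat_left[OF J X Jf sp ab] jmat_right[OF J X Jf sp ab] c ab unfolding jcond_def by simp
  qed (use J X in auto)
qed



lemma conj_iff:
  fixes P Q J M :: "complex mat"
  assumes P: "P \<in> carrier_mat d d" and Q: "Q \<in> carrier_mat d d" and J: "J \<in> carrier_mat d d"
    and M: "M \<in> carrier_mat d d" and PQ: "P * Q = 1\<^sub>m d" and QP: "Q * P = 1\<^sub>m d"
  shows "(P*J*Q)*M = M*transpose_mat (P*J*Q) \<longleftrightarrow>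
    J*(Q*M*transpose_mat Q) = (Q*M*transpose_mat Q)*transpose_mat J"
proof -
  have as: "A*B*C = A*(B*C)" if "A \<in> carrier_mat d d" "B \<in> carrier_mat d d" "C \<in> carrier_mat d d" for A B C :: "complex mat"
    using that by (rule assoc_mult_mat)
  have cr: "A*B \<in> carrier_mat d d" if "A \<in> carrier_mat d d" "B \<in> carrier_mat d d" for A B :: "complex mat"
    using that by (rule mult_carrier_mat)
  have tP: "transpose_mat P \<in> carrier_mat d d" and tQ: "transpose_mat Q \<in> carrier_mat d d"
    and tJ: "transpose_mat J \<in> carrier_mat d d" using P Q J by auto
  have tPQ: "transpose_mat Q * transpose_mat P = 1\<^sub>m d"
    using transpose_mult[OF P Q] PQ by simp
  have tQP: "transpose_mat P * transpose_mat Q = 1\<^sub>m d"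
    using transpose_mult[OF Q P] QP by simp
  have c1: "Q * (P * Z) = Z" if "Z \<in> carrier_mat d k" for Z :: "complex mat" and k
    using that P Q QP by (simp add: assoc_mult_mat[symmetric, of Q d d P d Z k])
  have c2: "P * (Q * Z) = Z" if "Z \<in> carrier_mat d k" for Z :: "complex mat" and k
    using that P Q PQ by (simp add: assoc_mult_mat[symmetric, of P d d Q d Z k])
  have c3: "Z * transpose_mat P * transpose_mat Q = Z" if "Z \<in> carrier_mat k d" for Z :: "complex mat" and k
    using that tP tQ tQP by (simp add: assoc_mult_mat[of Z k d _ d _ d])
  have c4: "Z * transpose_mat Q * transpose_mat P = Z" if "Z \<in> carrier_mat k d" for Z :: "complex mat" and k
    using that tP tQ tPQ by (simp add: assoc_mult_mat[of Z k d _ d _ d])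
  have tB: "transpose_mat (P*J*Q) = transpose_mat Q * transpose_mat J * transpose_mat P"
    using transpose_mult[of "P*J" d d Q d] transpose_mult[OF P J] P J Q by auto
  define X where "X = Q*M*transpose_mat Q"
  have X: "X \<in> carrier_mat d d" unfolding X_def using Q M tQ by auto
  have e1: "Q * ((P*J*Q)*M) * transpose_mat Q = J * X"
  proof -
    have "Q * ((P*J*Q)*M) * transpose_mat Q = Q * (P * (J * (Q*M*transpose_mat Q)))"
      using P Q J M tQ by (simp add: as cr)
    also have "\<dots> = J * X" unfolding X_def using c1[of "J * (Q*M*transpose_mat Q)" d] J Q M tQ by simp
    finally show ?thesis .
  qed
  have e2: "Q * (M*transpose_mat (P*J*Q)) * transpose_mat Q = X * transpose_mat J"
  proof -
    have "Q * (M*transpose_mat (P*J*Q)) * transpose_mat Q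
        = (Q*M*transpose_mat Q * transpose_mat J) * transpose_mat P * transpose_mat Q"
      unfolding tB using P Q J M tQ tP tJ by (simp add: as cr)
    also have "\<dots> = X * transpose_mat J" unfolding X_def
      by (rule c3) (use Q M tQ tJ in auto)
    finally show ?thesis .
  qed
  have e3: "P * (J * X) * transpose_mat P = (P*J*Q)*M"
  proof -
    have "P * (J * X) * transpose_mat P = P*J*Q*(M * transpose_mat Q * transpose_mat P)"
      unfolding X_def using P Q J M tQ tP by (simp add: as cr)
    also have "\<dots> = P*J*Q*M" using c4[OF M] by simp
    finally show ?thesis .
  qed
  have e4: "P * (X * transpose_mat J) * transpose_mat P = M*transpose_mat (P*J*Q)"
  proof -
    have "P * (X * transpose_mat J) * transpose_mat P = P * (Q * (M * (transpose_mat Q * transpose_mat J * transpose_mat P)))"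
      unfolding X_def using P Q J M tQ tP tJ by (simp add: as cr)
    also have "\<dots> = M*transpose_mat (P*J*Q)" unfolding tB
      by (rule c2) (use M tQ tJ tP in auto)
    finally show ?thesis .
  qed
  show ?thesis
  proof
    assume "(P*J*Q)*M = M*transpose_mat (P*J*Q)"
    then have "Q * ((P*J*Q)*M) * transpose_mat Q = Q * (M*transpose_mat (P*J*Q)) * transpose_mat Q" by simp
    then show "J*(Q*M*transpose_mat Q) = (Q*M*transpose_mat Q)*transpose_mat J"
      unfolding e1 e2 X_def .
  next
    assume "J*(Q*M*transpose_mat Q) = (Q*M*transpose_mat Q)*transpose_mat J"
    then have "P * (J * X) * transpose_mat P = P * (X * transpose_mat J) * transpose_mat P"
      unfolding X_def by simp
    then show "(P*J*Q)*M = M*transpose_mat (P*J*Q)" unfolding e3 e4 .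
  qed
qed



definition Mt :: "nat \<Rightarrow> ((nat\<Rightarrow>nat)\<Rightarrow>complex) \<Rightarrow> (nat\<Rightarrow>nat) \<Rightarrow> nat \<Rightarrow> complex mat" where
 "Mt d \<psi> i k = mat d d (\<lambda>(a,b). \<psi> (i(0:=a, k:=b)))"

definition phik :: "nat \<Rightarrow> complex mat \<Rightarrow> ((nat\<Rightarrow>nat)\<Rightarrow>complex) \<Rightarrow> (nat\<Rightarrow>nat) \<Rightarrow> nat \<Rightarrow> complex" where
 "phik d Y \<psi> i k = (\<Sum>j<d. Y$$(i k, j) * \<psi> (i(k:=j)))"

lemma tuples_upd: "i \<in> tuples n d \<Longrightarrow> k < n \<Longrightarrow> j < d \<Longrightarrow> i(k:=j) \<in> tuples n d"
  unfolding tuples_def by auto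

lemma tuples_lt: "i \<in> tuples n d \<Longrightarrow> k < n \<Longrightarrow> i k < d"
  unfolding tuples_def by auto

lemma A1:
  assumes n: "0 < n" and sym: "symmetric_tensor n d \<psi>" and i: "i \<in> tuples n d"
    and \<sigma>: "\<sigma> permutes {..<n}"
  shows "apply_first d Y \<psi> (i \<circ> \<sigma>) = phik d Y \<psi> i (\<sigma> 0)"
proof -
  have s0: "\<sigma> 0 < n" using permutes_in_image[OF \<sigma>, of 0] n by auto
  have inj: "inj \<sigma>" using permutes_inj[OF \<sigma>] .
  have "\<psi> ((i \<circ> \<sigma>)(0 := j)) = \<psi> (i(\<sigma> 0 := j))" if j: "j < d" for j
  proof -
    have "(i \<circ> \<sigma>)(0 := j) = (i(\<sigma> 0 := j)) \<circ> \<sigma>"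
    proof
      fix x show "((i \<circ> \<sigma>)(0 := j)) x = ((i(\<sigma> 0 := j)) \<circ> \<sigma>) x"
        using inj by (cases "x = 0") (auto dest: injD)
    qed
    moreover have "i(\<sigma> 0 := j) \<in> tuples n d" using tuples_upd[OF i s0 j] .
    ultimately show ?thesis using sym \<sigma> unfolding symmetric_tensor_def by auto
  qed
  then show ?thesis unfolding apply_first_def phik_def by (auto intro!: sum.cong)
qed

lemma A3:
  assumes n: "0 < n" and sym: "symmetric_tensor n d \<psi>"
  shows "symmetric_tensor n d (apply_first d Y \<psi>) \<longleftrightarrow>
    (\<forall>i\<in>tuples n d. \<forall>k<n. phik d Y \<psi> i k = phik d Y \<psi> i 0)"
proof
  assume s: "symmetric_tensor n d (apply_first d Y \<psi>)"
  show "\<forall>i\<in>tuples n d. \<forall>k<n. phik d Y \<psi> i k = phik d Y \<psi> i 0"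
  proof (intro ballI allI impI)
    fix i k assume i: "i \<in> tuples n d" and k: "k < n"
    have \<sigma>: "Transposition.transpose 0 k permutes {..<n}" by (rule permutes_swap_id) (use n k in auto)
    have "apply_first d Y \<psi> (i \<circ> Transposition.transpose 0 k) = apply_first d Y \<psi> i"
      using s i \<sigma> unfolding symmetric_tensor_def by blast
    moreover have "apply_first d Y \<psi> (i \<circ> Transposition.transpose 0 k) = phik d Y \<psi> i k"
      using A1[OF n sym i \<sigma>] by simp
    moreover have "apply_first d Y \<psi> (i \<circ> id) = phik d Y \<psi> i 0"
      using A1[OF n sym i permutes_id] by simp
    ultimately show "phik d Y \<psi> i k = phik d Y \<psi> i 0" by simp
  qed
next
  assume h: "\<forall>i\<in>tuples n d. \<forall>k<n. phik d Y \<psi> i k = phik d Y \<psi> i 0"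
  show "symmetric_tensor n d (apply_first d Y \<psi>)" unfolding symmetric_tensor_def
  proof (intro ballI allI impI)
    fix i \<sigma> assume i: "i \<in> tuples n d" and \<sigma>: "\<sigma> permutes {..<n}"
    have s0: "\<sigma> 0 < n" using permutes_in_image[OF \<sigma>, of 0] n by auto
    have "apply_first d Y \<psi> (i \<circ> \<sigma>) = phik d Y \<psi> i (\<sigma> 0)" by (rule A1[OF n sym i \<sigma>])
    also have "\<dots> = phik d Y \<psi> i 0" using h i s0 by blast
    also have "\<dots> = apply_first d Y \<psi> (i \<circ> id)" using A1[OF n sym i permutes_id] by simp
    finally show "apply_first d Y \<psi> (i \<circ> \<sigma>) = apply_first d Y \<psi> i" by simp
  qed
qed

lemma ent1:
  assumes Y: "Y \<in> carrier_mat d d" and ab: "a < d" "b < d"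
  shows "(Y * Mt d \<psi> i k)$$(a,b) = (\<Sum>c<d. Y$$(a,c) * \<psi> (i(0:=c,k:=b)))"
  using Y ab unfolding Mt_def by (auto simp: scalar_prod_def atLeast0LessThan intro!: sum.cong)

lemma ent2:
  assumes Y: "Y \<in> carrier_mat d d" and ab: "a < d" "b < d"
  shows "(Mt d \<psi> i k * transpose_mat Y)$$(a,b) = (\<Sum>c<d. \<psi> (i(0:=a,k:=c)) * Y$$(b,c))"
  using Y ab unfolding Mt_def by (auto simp: scalar_prod_def atLeast0LessThan intro!: sum.cong)

lemma A4:
  assumes Y: "Y \<in> carrier_mat d d" and n: "0 < n"
  shows "(\<forall>i\<in>tuples n d. \<forall>k<n. phik d Y \<psi> i k = phik d Y \<psi> i 0) \<longleftrightarrow>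
    (\<forall>i\<in>tuples n d. \<forall>k. 0 < k \<and> k < n \<longrightarrow> Y * Mt d \<psi> i k = Mt d \<psi> i k * transpose_mat Y)"
proof
  assume h: "\<forall>i\<in>tuples n d. \<forall>k<n. phik d Y \<psi> i k = phik d Y \<psi> i 0"
  show "\<forall>i\<in>tuples n d. \<forall>k. 0 < k \<and> k < n \<longrightarrow> Y * Mt d \<psi> i k = Mt d \<psi> i k * transpose_mat Y"
  proof (intro ballI allI impI)
    fix i k assume i: "i \<in> tuples n d" and k: "0 < k \<and> k < n"
    show "Y * Mt d \<psi> i k = Mt d \<psi> i k * transpose_mat Y"
    proof (rule eq_matI)
      fix a b assume "a < dim_row (Mt d \<psi> i k * transpose_mat Y)" "b < dim_col (Mt d \<psi> i k * transpose_mat Y)"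
      then have ab: "a < d" "b < d" using Y by (auto simp: Mt_def)
      define i' where "i' = i(0:=a,k:=b)"
      have i': "i' \<in> tuples n d" unfolding i'_def using tuples_upd[OF tuples_upd[OF i n ab(1)] _ ab(2)] k by auto
      have "phik d Y \<psi> i' k = (\<Sum>c<d. \<psi> (i(0:=a,k:=c)) * Y$$(b,c))"
        unfolding phik_def i'_def using k by (auto simp: mult.commute intro!: sum.cong)
      moreover have "phik d Y \<psi> i' 0 = (\<Sum>c<d. Y$$(a,c) * \<psi> (i(0:=c,k:=b)))"
      proof -
        have "i'(0:=c) = i(0:=c,k:=b)" for c unfolding i'_def using k by (auto simp: fun_upd_twist)
        then show ?thesis unfolding phik_def using k by (auto simp: i'_def)
      qed
      ultimately show "(Y * Mt d \<psi> i k)$$(a,b) = (Mt d \<psi> i k * transpose_mat Y)$$(a,b)"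
        using h i' k ent1[OF Y ab] ent2[OF Y ab] by metis
    qed (use Y in \<open>auto simp: Mt_def\<close>)
  qed
next
  assume h: "\<forall>i\<in>tuples n d. \<forall>k. 0 < k \<and> k < n \<longrightarrow> Y * Mt d \<psi> i k = Mt d \<psi> i k * transpose_mat Y"
  show "\<forall>i\<in>tuples n d. \<forall>k<n. phik d Y \<psi> i k = phik d Y \<psi> i 0"
  proof (intro ballI allI impI)
    fix i k assume i: "i \<in> tuples n d" and k: "k < n"
    show "phik d Y \<psi> i k = phik d Y \<psi> i 0"
    proof (cases "k = 0")
      case False
      have ab: "i 0 < d" "i k < d" using tuples_lt[OF i] k n by auto
      have "(Y * Mt d \<psi> i k)$$(i 0, i k) = (Mt d \<psi> i k * transpose_mat Y)$$(i 0, i k)"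
        using h i k False by auto
      moreover have "(Y * Mt d \<psi> i k)$$(i 0, i k) = phik d Y \<psi> i 0"
      proof -
        have "i(0:=c,k:=i k) = i(0:=c)" for c using False by (auto simp: fun_upd_twist)
        then show ?thesis unfolding ent1[OF Y ab] phik_def by simp
      qed
      moreover have "(Mt d \<psi> i k * transpose_mat Y)$$(i 0, i k) = phik d Y \<psi> i k"
      proof -
        have "i(0:=i 0,k:=c) = i(k:=c)" for c by auto
        then show ?thesis unfolding ent2[OF Y ab] phik_def by (simp add: mult.commute)
      qed
      ultimately show ?thesis by simp
    qed simp
  qed
qed



lemma sum_fst_map: "sum_list (map fst (map (\<lambda>(k, a). (k, f a)) n_as)) = sum_list (map fst n_as)"
  by (induction n_as) auto

lemma stab_char:
  fixes Y :: "complex mat"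
  assumes Y: "Y \<in> carrier_mat d d" and n: "0 < n" and sym: "symmetric_tensor n d \<psi>"
  shows "symmetric_tensor n d (apply_first d Y \<psi>) \<longleftrightarrow>
    (\<forall>i\<in>tuples n d. \<forall>k. 0 < k \<and> k < n \<longrightarrow> Y * Mt d \<psi> i k = Mt d \<psi> i k * transpose_mat Y)"
  using A3[OF n sym] A4[OF Y n] by simp

theorem theorem3:
  fixes n d :: nat and B P Q :: "complex mat" and n_as :: "(nat \<times> complex) list"
    and f :: "complex \<Rightarrow> complex" and \<psi> :: "(nat \<Rightarrow> nat) \<Rightarrow> complex"
  assumes "n \<ge> 2"
    and "P \<in> carrier_mat d d" and "Q \<in> carrier_mat d d"
    and "P * Q = 1\<^sub>m d" and "Q * P = 1\<^sub>m d"
    and "\<forall>(k, a) \<in> set n_as. 0 < k"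
    and "sum_list (map fst n_as) = d"
    and "B = P * jordan_matrix n_as * Q"
    and "inj_on f (snd ` set n_as)"
    and "symmetric_tensor n d \<psi>"
  shows "symmetric_tensor n d (apply_first d B \<psi>) \<longleftrightarrow>
         symmetric_tensor n d
           (apply_first d (P * jordan_matrix (map (\<lambda>(k, a). (k, f a)) n_as) * Q) \<psi>)"
proof -
  note P = assms(2) and Q = assms(3) and PQ = assms(4) and QP = assms(5) and D = assms(7)
  have n: "0 < n" using assms(1) by simp
  define J where "J = jordan_matrix n_as"
  define J' where "J' = jordan_matrix (map (\<lambda>(k, a). (k, f a)) n_as)"
  define \<mu> where "\<mu> = jev n_as"
  define \<nu> where "\<nu> = (\<lambda>a. f (jev n_as a))"
  define s where "s = jsup n_as"
  have Jc: "J \<in> carrier_mat d d" unfolding J_def using jordan_matrix_carrier[of n_as] D by simp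
  have J'c: "J' \<in> carrier_mat d d" unfolding J'_def using jordan_matrix_carrier[of "map (\<lambda>(k, a). (k, f a)) n_as"] D sum_fst_map[of f n_as] by simp
  have Jf: "J $$ (a,b) = (if a = b then \<mu> a else if b = Suc a \<and> s a then 1 else 0)" if "a < d" "b < d" for a b
    unfolding J_def \<mu>_def s_def using jordan_matrix_index[of a n_as b] that D by simp
  have J'f: "J' $$ (a,b) = (if a = b then \<nu> a else if b = Suc a \<and> s a then 1 else 0)" if "a < d" "b < d" for a b
  proof -
    have d2: "sum_list (map fst (map (\<lambda>(k, a). (k, f a)) n_as)) = d" using sum_fst_map[of f n_as] D by simp
    have "a < sum_list (map fst (map (\<lambda>(k, a). (k, f a)) n_as))" "b < sum_list (map fst (map (\<lambda>(k, a). (k, f a)) n_as))"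
      using that d2 by auto
    note e = jordan_matrix_index[OF this]
    show ?thesis unfolding J'_def \<nu>_def s_def e jsup_map jev_map using that D by simp
  qed
  have spmu: "\<forall>i. s i \<longrightarrow> Suc i < d \<and> \<mu> (Suc i) = \<mu> i" unfolding s_def \<mu>_def using jsup_prop[of n_as] D by auto
  have spnu: "\<forall>i. s i \<longrightarrow> Suc i < d \<and> \<nu> (Suc i) = \<nu> i" unfolding s_def \<nu>_def using jsup_prop[of n_as] D by auto
  have sp: "\<forall>i. s i \<longrightarrow> Suc i < d" using spmu by auto
  have eqv: "\<forall>a b. a < d \<longrightarrow> b < d \<longrightarrow> (\<mu> a = \<mu> b \<longleftrightarrow> \<nu> a = \<nu> b)"
    unfolding \<mu>_def \<nu>_def using assms(9) jev_in[of _ n_as] D by (auto dest: inj_onD)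
  have eqv': "\<forall>a b. a < d \<longrightarrow> b < d \<longrightarrow> (\<nu> a = \<nu> b \<longleftrightarrow> \<mu> a = \<mu> b)" using eqv by blast
  have key: "(P*J*Q) * M = M * transpose_mat (P*J*Q) \<longleftrightarrow> (P*J'*Q) * M = M * transpose_mat (P*J'*Q)"
    if M: "M \<in> carrier_mat d d" for M
  proof -
    define X where "X = Q*M*transpose_mat Q"
    have X: "X \<in> carrier_mat d d" unfolding X_def using Q M by auto
    have "(P*J*Q) * M = M * transpose_mat (P*J*Q) \<longleftrightarrow> J*X = X*transpose_mat J"
      unfolding X_def by (rule conj_iff[OF P Q Jc M PQ QP])
    also have "\<dots> \<longleftrightarrow> jcond d \<mu> s X" by (rule jmat_iff[OF Jc X Jf sp])
    also have "\<dots> \<longleftrightarrow> jcond d \<nu> s X" using jcond_transfer[OF _ spmu eqv] jcond_transfer[OF _ spnu eqv'] by blast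
    also have "\<dots> \<longleftrightarrow> J'*X = X*transpose_mat J'" by (rule jmat_iff[OF J'c X J'f sp, symmetric])
    also have "\<dots> \<longleftrightarrow> (P*J'*Q) * M = M * transpose_mat (P*J'*Q)"
      unfolding X_def by (rule conj_iff[OF P Q J'c M PQ QP, symmetric])
    finally show ?thesis .
  qed
  have Bc: "P*J*Q \<in> carrier_mat d d" using P Q Jc by auto
  have B'c: "P*J'*Q \<in> carrier_mat d d" using P Q J'c by auto
  have Mc: "Mt d \<psi> i k \<in> carrier_mat d d" for i k unfolding Mt_def by auto
  show ?thesis
    unfolding assms(8) J_def[symmetric] J'_def[symmetric]
    unfolding stab_char[OF Bc n assms(10)] stab_char[OF B'c n assms(10)]
    using key[OF Mc] by simp
qed

end
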